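(* Let $G=(V,E)$ be a connected graph with $n$ nodes and let $G'=(V,E\cup \beta)$ be the modified graph after the insertion of a batch $\beta$ of edges. Let $S$ be a set of $r$ shortest paths of $G$ sampled according to $\pi_{G}$, with $r=\frac{c}{\epsilon^{2}}\left(\lfloor\log_{2}\left(VD(G)-2\right)\rfloor+1+\ln\frac{1}{\delta}\right)$ for some constants $\epsilon,\delta\in(0,1)$. Then, if a new set $S'$ of shortest paths of $G'$ is built according to procedure $\mathcal{P}$ and the approximated betweenness centrality $\tilde{c}'_B(v)$ of each node $v$ is computed as the fraction of paths of $S'$ that $v$ is internal to, then \[ \Pr(\exists v\in V\ \text{s.t.}\ |c'_{B}(v)-\tilde{c}'_B(v)|>\epsilon)<\delta, \] where $c'_{B}(v)$ is the new exact value of betweenness centrality of $v$ after the edge insertions.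
   Context: For a graph with $n$ nodes, $\sigma_{st}$ denotes the number of shortest paths from $s$ to $t$ and $\sigma_{st}(v)$ the number of those passing through $v$; the (normalized) betweenness centrality is $c_B(v)=\frac{1}{n(n-1)}\sum_{s\neq v\neq t}\frac{\sigma_{st}(v)}{\sigma_{st}}$. The sampling distribution $\pi_G$ assigns to each shortest path $p_{st}$ of $G$ the probability $\pi_G(p_{st})=\frac{1}{n(n-1)}\cdot\frac{1}{\sigma_{st}}$ of being chosen in each of the $r$ independent sampling iterations (choose an ordered node pair $(s,t)$ uniformly at random, then a shortest $s$–$t$ path uniformly at random). $VD(G)$ is the vertex diameter of $G$ (number of nodes on a shortest path of $G$ with the maximum number of nodes), or an upper bound on it that cannot increase under edge insertions in a connected graph; $c\approx 0.5$ is a universal constant. Procedure $\mathcal{P}$: for each sampled path $p_{st}\in S$, keep it ($p'_{st}=p_{st}$) if the new distance $d'_s(t)$ equals the old distance $d_s(t)$ and the new number of shortest paths $\sigma'_{st}$ equals $\sigma_{st}$; otherwise replace it by a path $p'_{st}$ chosen uniformly at random among the set of shortest $s$–$t$ paths in $G'$. *)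

theory Defs
  imports "HOL-Probability.Probability"
begin

definition undirected_graph :: "'a set \<Rightarrow> ('a \<times> 'a) set \<Rightarrow> bool" where
  "undirected_graph V E \<longleftrightarrow> finite V \<and> E \<subseteq> V \<times> V \<and> sym E \<and> (\<forall>v. (v, v) \<notin> E)"

definition connected_graph :: "'a set \<Rightarrow> ('a \<times> 'a) set \<Rightarrow> bool" where
  "connected_graph V E \<longleftrightarrow> (\<forall>s\<in>V. \<forall>t\<in>V. (s, t) \<in> E\<^sup>*)"

definition walk :: "('a \<times> 'a) set \<Rightarrow> 'a list \<Rightarrow> bool" where
  "walk E p \<longleftrightarrow> p \<noteq> [] \<and> (\<forall>i. Suc i < length p \<longrightarrow> (p ! i, p ! Suc i) \<in> E)"

definition dist_g :: "('a \<times> 'a) set \<Rightarrow> 'a \<Rightarrow> 'a \<Rightarrow> nat" where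
  "dist_g E s t = (LEAST k. \<exists>p. walk E p \<and> hd p = s \<and> last p = t \<and> length p = Suc k)"

definition shortest_paths :: "('a \<times> 'a) set \<Rightarrow> 'a \<Rightarrow> 'a \<Rightarrow> 'a list set" where
  "shortest_paths E s t =
     {p. walk E p \<and> hd p = s \<and> last p = t \<and> length p = Suc (dist_g E s t)}"

definition sigma :: "('a \<times> 'a) set \<Rightarrow> 'a \<Rightarrow> 'a \<Rightarrow> nat" where
  "sigma E s t = card (shortest_paths E s t)"

definition sigma_via :: "('a \<times> 'a) set \<Rightarrow> 'a \<Rightarrow> 'a \<Rightarrow> 'a \<Rightarrow> nat" where
  "sigma_via E s t v = card {p \<in> shortest_paths E s t. v \<in> set p}"

definition betweenness :: "'a set \<Rightarrow> ('a \<times> 'a) set \<Rightarrow> 'a \<Rightarrow> real" where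
  "betweenness V E v =
     (1 / (real (card V) * (real (card V) - 1))) *
     (\<Sum>(s, t) \<in> {(s, t). s \<in> V \<and> t \<in> V \<and> s \<noteq> t \<and> s \<noteq> v \<and> t \<noteq> v}.
        real (sigma_via E s t v) / real (sigma E s t))"

definition vertex_diameter :: "'a set \<Rightarrow> ('a \<times> 'a) set \<Rightarrow> nat" where
  "vertex_diameter V E =
     Max {length p | p s t. s \<in> V \<and> t \<in> V \<and> p \<in> shortest_paths E s t}"

definition path_sampling :: "'a set \<Rightarrow> ('a \<times> 'a) set \<Rightarrow> 'a list pmf" where
  "path_sampling V E =
     pmf_of_set {(s, t). s \<in> V \<and> t \<in> V \<and> s \<noteq> t} \<bind>
       (\<lambda>(s, t). pmf_of_set (shortest_paths E s t))"

text \<open>One step of procedure P: keep the old path, or resample a shortest path in G'.\<close>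
definition update_path :: "('a \<times> 'a) set \<Rightarrow> ('a \<times> 'a) set \<Rightarrow> 'a list \<Rightarrow> 'a list pmf" where
  "update_path E E' p =
     (let s = hd p; t = last p in
      if dist_g E' s t = dist_g E s t \<and> sigma E' s t = sigma E s t
      then return_pmf p
      else pmf_of_set (shortest_paths E' s t))"

definition internal :: "'a \<Rightarrow> 'a list \<Rightarrow> bool" where
  "internal v p \<longleftrightarrow> v \<in> set p \<and> v \<noteq> hd p \<and> v \<noteq> last p"

definition sample_size :: "real \<Rightarrow> real \<Rightarrow> real \<Rightarrow> nat \<Rightarrow> nat" where
  "sample_size c \<epsilon> \<delta> D =
     nat \<lceil>c / \<epsilon>\<^sup>2 * (real_of_int \<lfloor>log 2 (real D - 2)\<rfloor> + 1 + ln (1 / \<delta>))\<rceil>"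

definition sample_set :: "nat \<Rightarrow> 'a list pmf \<Rightarrow> (nat \<Rightarrow> 'a list) pmf" where
  "sample_set r D = Pi_pmf {..<r} [] (\<lambda>_. D)"

definition updated_sample :: "nat \<Rightarrow> ('a \<times> 'a) set \<Rightarrow> ('a \<times> 'a) set \<Rightarrow> (nat \<Rightarrow> 'a list) \<Rightarrow> (nat \<Rightarrow> 'a list) pmf" where
  "updated_sample r E E' S = Pi_pmf {..<r} [] (\<lambda>i. update_path E E' (S i))"

definition approx_betweenness :: "nat \<Rightarrow> (nat \<Rightarrow> 'a list) \<Rightarrow> 'a \<Rightarrow> real" where
  "approx_betweenness r S v = real (card {i \<in> {..<r}. internal v (S i)}) / real r"

end

theory Submission
  imports Defs
begin


lemma walk_mono: "E \<subseteq> E' \<Longrightarrow> walk E p \<Longrightarrow> walk E' p"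
  unfolding walk_def by blast

lemma walk_exists:
  assumes "(s, t) \<in> E\<^sup>*"
  shows "\<exists>p. walk E p \<and> hd p = s \<and> last p = t"
  using assms
proof (induction rule: rtrancl_induct)
  case base
  then show ?case by (rule exI[of _ "[s]"]) (simp add: walk_def)
next
  case (step y z)
  then obtain p where p: "walk E p" "hd p = s" "last p = y" by blast
  have "walk E (p @ [z])"
    unfolding walk_def
  proof (intro conjI allI impI)
    fix i assume i: "Suc i < length (p @ [z])"
    show "((p @ [z]) ! i, (p @ [z]) ! Suc i) \<in> E"
    proof (cases "Suc i < length p")
      case True
      then show ?thesis using p(1) by (simp add: walk_def nth_append)
    next
      case False
      then have "Suc i = length p" using i by simp
      moreover have "p \<noteq> []" using p(1) by (simp add: walk_def)
      ultimately have "p ! i = last p" by (metis diff_Suc_1 last_conv_nth)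
      then show ?thesis using \<open>Suc i = length p\<close> p(3) step(2)
        by (simp add: nth_append)
    qed
  qed simp
  moreover have "hd (p @ [z]) = s" using p by (simp add: walk_def)
  ultimately show ?case by (intro exI[of _ "p @ [z]"]) simp
qed

lemma dist_witness:
  assumes "walk E p" "hd p = s" "last p = t"
  shows "\<exists>q. walk E q \<and> hd q = s \<and> last q = t \<and> length q = Suc (dist_g E s t)"
proof -
  have ex: "\<exists>k. \<exists>q. walk E q \<and> hd q = s \<and> last q = t \<and> length q = Suc k"
    using assms by (intro exI[of _ "length p - 1"] exI[of _ p]) (auto simp: walk_def)
  show ?thesis unfolding dist_g_def by (rule LeastI_ex[OF ex])
qed

lemma dist_le:
  assumes "walk E p" "hd p = s" "last p = t"
  shows "dist_g E s t \<le> length p - 1"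
proof -
  have "length p = Suc (length p - 1)" using assms by (cases p) (auto simp: walk_def)
  then show ?thesis unfolding dist_g_def using assms by (intro Least_le) blast
qed

lemma SP_nonempty:
  assumes "walk E p" "hd p = s" "last p = t"
  shows "shortest_paths E s t \<noteq> {}"
  using dist_witness[OF assms] unfolding shortest_paths_def by blast

lemma walk_set:
  assumes "E \<subseteq> V \<times> V" "walk E p" "hd p \<in> V"
  shows "set p \<subseteq> V"
proof
  fix x assume "x \<in> set p"
  then obtain i where i: "i < length p" "p ! i = x" by (auto simp: in_set_conv_nth)
  show "x \<in> V"
  proof (cases i)
    case 0
    then show ?thesis using i assms by (cases p) (auto simp: walk_def)
  next
    case (Suc j)
    then have "(p ! j, p ! i) \<in> E" using assms(2) i by (auto simp: walk_def)
    then show ?thesis using assms(1) i by auto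
  qed
qed

lemma SP_finite:
  assumes "finite V" "E \<subseteq> V \<times> V" "s \<in> V"
  shows "finite (shortest_paths E s t)"
proof -
  have "shortest_paths E s t \<subseteq> {p. set p \<subseteq> V \<and> length p = Suc (dist_g E s t)}"
    unfolding shortest_paths_def using walk_set[OF assms(2)] assms(3) by blast
  moreover have "finite {p. set p \<subseteq> V \<and> length p = Suc (dist_g E s t)}"
    using assms(1) by (rule finite_lists_length_eq)
  ultimately show ?thesis by (rule finite_subset)
qed

lemma SP_props:
  assumes "p \<in> shortest_paths E s t"
  shows "walk E p" "hd p = s" "last p = t" "length p = Suc (dist_g E s t)"
  using assms by (auto simp: shortest_paths_def)

lemma dist_mono:
  assumes "E \<subseteq> E'" "walk E p" "hd p = s" "last p = t"
  shows "dist_g E' s t \<le> dist_g E s t"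
proof -
  obtain q where q: "walk E q" "hd q = s" "last q = t" "length q = Suc (dist_g E s t)"
    using dist_witness[OF assms(2-4)] by blast
  have "dist_g E' s t \<le> length q - 1" using walk_mono[OF assms(1) q(1)] q(2,3) by (rule dist_le)
  then show ?thesis using q(4) by simp
qed

lemma SP_eq_if:
  assumes "E \<subseteq> E'" "finite (shortest_paths E' s t)"
    "dist_g E' s t = dist_g E s t" "sigma E' s t = sigma E s t"
  shows "shortest_paths E s t = shortest_paths E' s t"
proof -
  have sub: "shortest_paths E s t \<subseteq> shortest_paths E' s t"
    using assms(1,3) walk_mono unfolding shortest_paths_def by auto
  show ?thesis
    using card_subset_eq[OF assms(2) sub] assms(4) unfolding sigma_def by simp
qed


lemma pairs_finite: "finite V \<Longrightarrow> finite {(s, t). s \<in> V \<and> t \<in> V \<and> s \<noteq> t}"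
  by (rule finite_subset[of _ "V \<times> V"]) auto

lemma pairs_nonempty:
  assumes "finite V" "card V \<ge> 2"
  shows "{(s, t). s \<in> V \<and> t \<in> V \<and> (s::'a) \<noteq> t} \<noteq> {}"
proof -
  have "V \<noteq> {}" using assms by auto
  then obtain a where a: "a \<in> V" by blast
  have "card (V - {a}) \<ge> 1" using assms a by (simp add: card_Diff_singleton)
  then have "V - {a} \<noteq> {}" by (metis card.empty not_one_le_zero)
  then obtain b where "b \<in> V" "b \<noteq> a" by blast
  then have "a \<in> V" "b \<in> V" "a \<noteq> b" using a by auto
  then show ?thesis by blast
qed

lemma conn_walk:
  assumes "connected_graph V E" "s \<in> V" "t \<in> V"
  shows "\<exists>p. walk E p \<and> hd p = s \<and> last p = t"
  using assms unfolding connected_graph_def by (intro walk_exists) blast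

lemma update_bind:
  assumes "undirected_graph V E" "undirected_graph V E'" "E \<subseteq> E'" "connected_graph V E"
    "s \<in> V" "t \<in> V"
  shows "pmf_of_set (shortest_paths E s t) \<bind> update_path E E' = pmf_of_set (shortest_paths E' s t)"
proof -
  obtain w where w: "walk E w" "hd w = s" "last w = t" using conn_walk[OF assms(4-6)] by blast
  have fin: "finite (shortest_paths E s t)" "finite (shortest_paths E' s t)"
    using assms(1,2,5) SP_finite[of V E s t] SP_finite[of V E' s t] unfolding undirected_graph_def by auto
  have ne: "shortest_paths E s t \<noteq> {}" using SP_nonempty[OF w] .
  show ?thesis
  proof (cases "dist_g E' s t = dist_g E s t \<and> sigma E' s t = sigma E s t")
    case True
    have eq: "shortest_paths E s t = shortest_paths E' s t"
      using SP_eq_if[OF assms(3) fin(2)] True by blast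
    have "pmf_of_set (shortest_paths E s t) \<bind> update_path E E' =
          pmf_of_set (shortest_paths E s t) \<bind> return_pmf"
      using True fin ne
      by (intro bind_pmf_cong refl) (auto simp: update_path_def Let_def shortest_paths_def)
    then show ?thesis using eq by (simp add: bind_return_pmf')
  next
    case False
    have "pmf_of_set (shortest_paths E s t) \<bind> update_path E E' =
          pmf_of_set (shortest_paths E s t) \<bind> (\<lambda>_. pmf_of_set (shortest_paths E' s t))"
      using False fin ne
      by (intro bind_pmf_cong refl) (auto simp: update_path_def Let_def shortest_paths_def)
    then show ?thesis by simp
  qed
qed

lemma sampling_update:
  assumes "undirected_graph V E" "undirected_graph V E'" "E \<subseteq> E'" "connected_graph V E"
    "card V \<ge> 2"
  shows "path_sampling V E \<bind> update_path E E' = path_sampling V E'"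
proof -
  have fV: "finite V" using assms(1) by (simp add: undirected_graph_def)
  let ?P = "{(s, t). s \<in> V \<and> t \<in> V \<and> s \<noteq> t}"
  have sP: "set_pmf (pmf_of_set ?P) = ?P"
    using pairs_finite[OF fV] pairs_nonempty[OF fV assms(5)] by (intro set_pmf_of_set)
  have "(case x of (s, t) \<Rightarrow> pmf_of_set (shortest_paths E s t)) \<bind> update_path E E' =
        (case x of (s, t) \<Rightarrow> pmf_of_set (shortest_paths E' s t))" if xP: "x \<in> ?P" for x
  proof -
    obtain s t where x: "x = (s, t)" "s \<in> V" "t \<in> V" using xP by blast
    show ?thesis using update_bind[OF assms(1-4) x(2,3)] x(1) by simp
  qed
  then show ?thesis
    unfolding path_sampling_def bind_assoc_pmf
    by (intro bind_pmf_cong) (simp_all add: sP)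
qed

lemma S'_eq:
  assumes "undirected_graph V E" "undirected_graph V E'" "E \<subseteq> E'" "connected_graph V E"
    "card V \<ge> 2"
  shows "sample_set r (path_sampling V E) \<bind> updated_sample r E E' =
         Pi_pmf {..<r} [] (\<lambda>_. path_sampling V E')"
proof -
  have "Pi_pmf {..<r} [] (\<lambda>_. path_sampling V E') =
        Pi_pmf {..<r} [] (\<lambda>i. path_sampling V E \<bind> update_path E E')"
    using sampling_update[OF assms] by simp
  also have "\<dots> = sample_set r (path_sampling V E) \<bind> updated_sample r E E'"
    unfolding sample_set_def updated_sample_def
    by (rule Pi_pmf_bind) simp
  finally show ?thesis by simp
qed

lemma set_pmf_sampling:
  assumes "undirected_graph V E" "connected_graph V E" "card V \<ge> 2"
  shows "set_pmf (path_sampling V E) =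
     (\<Union>(s,t)\<in>{(s, t). s \<in> V \<and> t \<in> V \<and> s \<noteq> t}. shortest_paths E s t)"
proof -
  have fV: "finite V" using assms(1) by (simp add: undirected_graph_def)
  have "set_pmf (pmf_of_set (shortest_paths E s t)) = shortest_paths E s t" if st: "s \<in> V" "t \<in> V" for s t
  proof -
    obtain w where w: "walk E w" "hd w = s" "last w = t" using conn_walk[OF assms(2) st] by blast
    have "finite (shortest_paths E s t)" using SP_finite[of V E s t] assms(1) st by (auto simp: undirected_graph_def)
    then show ?thesis using SP_nonempty[OF w] by (intro set_pmf_of_set)
  qed
  moreover have "set_pmf (pmf_of_set {(s, t). s \<in> V \<and> t \<in> V \<and> s \<noteq> t}) = {(s, t). s \<in> V \<and> t \<in> V \<and> s \<noteq> t}"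
    using pairs_finite[OF fV] pairs_nonempty[OF fV assms(3)] by (intro set_pmf_of_set)
  ultimately show ?thesis unfolding path_sampling_def set_bind_pmf
    by (intro SUP_cong) auto
qed


lemma integrable_pmf_bounded:
  fixes f :: "'a \<Rightarrow> real"
  assumes "\<And>x. \<bar>f x\<bar> \<le> B"
  shows "integrable (measure_pmf M) f"
  by (rule measure_pmf.integrable_const_bound[where B=B]) (use assms in auto)

lemma markov_pmf:
  fixes X :: "'a \<Rightarrow> real" and f :: "real \<Rightarrow> real"
  assumes "integrable (measure_pmf M) (\<lambda>x. f (X x))"
    "\<And>x. 0 \<le> f (X x)" "0 < f a" "\<And>x. a \<le> X x \<Longrightarrow> f a \<le> f (X x)"
  shows "measure_pmf.prob M {x. a \<le> X x} \<le> measure_pmf.expectation M (\<lambda>x. f (X x)) / f a"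
proof -
  have "measure_pmf.prob M {x. a \<le> X x} \<le> measure_pmf.prob M {x\<in>space (measure_pmf M). f a \<le> f (X x)}"
    using assms(4) by (intro measure_pmf.finite_measure_mono) auto
  also have "\<dots> \<le> measure_pmf.expectation M (\<lambda>x. f (X x)) / f a"
    using assms by (intro integral_Markov_inequality_measure) auto
  finally show ?thesis .
qed

lemma expectation_indicator_affine:
  "measure_pmf.expectation Q (\<lambda>x. 1 + c * indicator {x. P x} x) = 1 + c * measure_pmf.prob Q {x. P x}"
proof -
  have i1: "integrable (measure_pmf Q) (\<lambda>x. c * indicator {x. P x} x :: real)"
    by (rule integrable_pmf_bounded[where B="\<bar>c\<bar>"]) (auto simp: indicator_def)
  have "measure_pmf.expectation Q (\<lambda>x. 1 + c * indicator {x. P x} x) =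
        measure_pmf.expectation Q (\<lambda>x. 1) + measure_pmf.expectation Q (\<lambda>x. c * indicator {x. P x} x)"
    by (rule Bochner_Integration.integral_add) (use i1 in auto)
  also have "\<dots> = 1 + c * measure_pmf.prob Q {x. P x}"
    by simp
  finally show ?thesis .
qed

lemma mgf_count:
  fixes Q :: "'b pmf" and l :: real
  assumes "finite A"
  shows "measure_pmf.expectation (Pi_pmf A d (\<lambda>_. Q))
           (\<lambda>T. exp (l * real (card {i\<in>A. P (T i)}))) =
         (1 + (exp l - 1) * measure_pmf.prob Q {x. P x}) ^ card A"
proof -
  define f where "f = (\<lambda>x. 1 + (exp l - 1) * indicator {x. P x} x :: real)"
  have f_eq: "f x = (if P x then exp l else 1)" for x by (simp add: f_def)
  have "exp (l * real (card {i\<in>A. P (T i)})) = (\<Prod>i\<in>A. f (T i))" for T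
  proof -
    have "(\<Prod>i\<in>A. f (T i)) = (\<Prod>i\<in>{i\<in>A. P (T i)}. exp l)"
      unfolding f_eq using prod.inter_filter[OF assms, of "\<lambda>_. exp l" "\<lambda>i. P (T i)"] by simp
    also have "\<dots> = exp l ^ card {i\<in>A. P (T i)}" by simp
    also have "\<dots> = exp (l * real (card {i\<in>A. P (T i)}))"
      by (simp add: exp_of_nat_mult[symmetric] mult.commute)
    finally show ?thesis by simp
  qed
  then have "measure_pmf.expectation (Pi_pmf A d (\<lambda>_. Q)) (\<lambda>T. exp (l * real (card {i\<in>A. P (T i)}))) =
        measure_pmf.expectation (Pi_pmf A d (\<lambda>_. Q)) (\<lambda>T. \<Prod>i\<in>A. f (T i))" by simp
  also have "\<dots> = (\<Prod>i\<in>A. measure_pmf.expectation Q f)"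
    by (rule expectation_prod_Pi_pmf[OF assms])
      (auto simp: f_eq intro!: integrable_pmf_bounded[where B="exp l + 1"])
  also have "\<dots> = (1 + (exp l - 1) * measure_pmf.prob Q {x. P x}) ^ card A"
    unfolding f_def expectation_indicator_affine by simp
  finally show ?thesis .
qed

lemma base_le_exp:
  fixes q l :: real
  assumes "0 \<le> q" "q \<le> 1"
  shows "(1 + (exp l - 1) * q) ^ r \<le> exp (real r * q * (exp l - 1))"
proof -
  have "0 \<le> 1 + (exp l - 1) * q"
  proof -
    have "(1 - q) + exp l * q \<ge> 0" using assms by (intro add_nonneg_nonneg) auto
    then show ?thesis by (simp add: algebra_simps)
  qed
  then have "(1 + (exp l - 1) * q) ^ r \<le> exp ((exp l - 1) * q) ^ r"
    by (intro power_mono) (use exp_ge_add_one_self in auto)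
  also have "\<dots> = exp (real r * q * (exp l - 1))"
    by (simp add: exp_of_nat_mult[symmetric] mult_ac)
  finally show ?thesis .
qed

context
  fixes Q :: "'b pmf" and P :: "'b \<Rightarrow> bool" and r :: nat and d :: 'b
begin

definition cnt :: "(nat \<Rightarrow> 'b) \<Rightarrow> real" where
  "cnt T = real (card {i\<in>{..<r}. P (T i)})"

lemma cnt_bounds: "0 \<le> cnt T" "cnt T \<le> real r"
proof -
  have "card {i\<in>{..<r}. P (T i)} \<le> card {..<r}" by (intro card_mono) auto
  then show "0 \<le> cnt T" "cnt T \<le> real r" by (auto simp: cnt_def)
qed

lemma upper_tail:
  assumes "0 \<le> l"
  shows "measure_pmf.prob (Pi_pmf {..<r} d (\<lambda>_. Q)) {T. a \<le> cnt T} \<le>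
     exp (real r * measure_pmf.prob Q {x. P x} * (exp l - 1) - l * a)"
proof -
  let ?q = "measure_pmf.prob Q {x. P x}"
  have "measure_pmf.prob (Pi_pmf {..<r} d (\<lambda>_. Q)) {T. a \<le> cnt T} \<le>
    measure_pmf.expectation (Pi_pmf {..<r} d (\<lambda>_. Q)) (\<lambda>T. exp (l * cnt T)) / exp (l * a)"
    using assms cnt_bounds
    by (intro markov_pmf[where f="\<lambda>x. exp (l * x)"] integrable_pmf_bounded[where B="exp (l * real r)"])
       (auto intro!: mult_left_mono)
  also have "\<dots> = (1 + (exp l - 1) * ?q) ^ r / exp (l * a)"
    unfolding cnt_def using mgf_count[of "{..<r}" d Q l P] by simp
  also have "\<dots> \<le> exp (real r * ?q * (exp l - 1)) / exp (l * a)"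
    by (intro divide_right_mono base_le_exp) auto
  also have "\<dots> = exp (real r * ?q * (exp l - 1) - l * a)"
    by (simp add: exp_diff)
  finally show ?thesis .
qed

lemma lower_tail:
  assumes "0 \<le> l"
  shows "measure_pmf.prob (Pi_pmf {..<r} d (\<lambda>_. Q)) {T. cnt T \<le> b} \<le>
     exp (real r * measure_pmf.prob Q {x. P x} * (exp (- l) - 1) + l * b)"
proof -
  let ?q = "measure_pmf.prob Q {x. P x}"
  have "measure_pmf.prob (Pi_pmf {..<r} d (\<lambda>_. Q)) {T. cnt T \<le> b} =
        measure_pmf.prob (Pi_pmf {..<r} d (\<lambda>_. Q)) {T. - b \<le> - cnt T}" by simp
  also have "\<dots> \<le>
    measure_pmf.expectation (Pi_pmf {..<r} d (\<lambda>_. Q)) (\<lambda>T. exp (l * (- cnt T))) / exp (l * (-b))"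
    using assms cnt_bounds
    by (intro markov_pmf[where f="\<lambda>x. exp (l * x)"] integrable_pmf_bounded[where B="1"])
       (auto intro!: mult_left_mono simp: mult_nonneg_nonneg)
  also have "\<dots> = (1 + (exp (-l) - 1) * ?q) ^ r / exp (l * (-b))"
    unfolding cnt_def using mgf_count[of "{..<r}" d Q "-l" P] by simp
  also have "\<dots> \<le> exp (real r * ?q * (exp (-l) - 1)) / exp (l * (-b))"
    by (intro divide_right_mono base_le_exp) auto
  also have "\<dots> = exp (real r * ?q * (exp (- l) - 1) + l * b)"
    by (simp add: exp_diff exp_minus field_simps exp_add[symmetric])
  finally show ?thesis .
qed

lemma small_tail:
  assumes "0 < a"
  shows "measure_pmf.prob (Pi_pmf {..<r} d (\<lambda>_. Q)) {T. a \<le> cnt T} \<le>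
     (exp (real r * measure_pmf.prob Q {x. P x} * (exp 1 - 1)) - 1) / (exp a - 1)"
proof -
  let ?q = "measure_pmf.prob Q {x. P x}"
  have ec: "\<And>T. exp (cnt T) \<le> exp (real r)" using cnt_bounds by simp
  have bnd: "\<And>T. \<bar>exp (cnt T) - 1\<bar> \<le> exp (real r) + 1"
    using ec by (smt (verit) exp_gt_zero)
  have "measure_pmf.prob (Pi_pmf {..<r} d (\<lambda>_. Q)) {T. a \<le> cnt T} \<le>
    measure_pmf.expectation (Pi_pmf {..<r} d (\<lambda>_. Q)) (\<lambda>T. exp (cnt T) - 1) / (exp a - 1)"
    using assms cnt_bounds
    by (intro markov_pmf[where f="\<lambda>x. exp x - 1"] integrable_pmf_bounded[OF bnd]) auto
  also have "measure_pmf.expectation (Pi_pmf {..<r} d (\<lambda>_. Q)) (\<lambda>T. exp (cnt T) - 1) =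
      measure_pmf.expectation (Pi_pmf {..<r} d (\<lambda>_. Q)) (\<lambda>T. exp (cnt T)) - 1"
    using cnt_bounds
    by (subst Bochner_Integration.integral_diff) (auto intro!: integrable_pmf_bounded[where B="exp (real r)"])
  also have "\<dots> = (1 + (exp 1 - 1) * ?q) ^ r - 1"
    unfolding cnt_def using mgf_count[of "{..<r}" d Q 1 P] by simp
  also have "((1 + (exp 1 - 1) * ?q) ^ r - 1) / (exp a - 1) \<le>
             (exp (real r * ?q * (exp 1 - 1)) - 1) / (exp a - 1)"
    using assms by (intro divide_right_mono diff_right_mono base_le_exp) auto
  finally show ?thesis by simp
qed

end


lemma exp_neg_quad: "0 \<le> (l::real) \<Longrightarrow> exp (- l) \<le> 1 - l + l\<^sup>2 / 2"
proof -
  assume l: "0 \<le> l"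
  obtain t where t: "exp (-l) = (\<Sum>m<3. ((-l) ^ m) / fact m) + (exp t / fact 3) * (-l) ^ 3"
    using Maclaurin_exp_le[of "-l" 3] by blast
  have "(\<Sum>m<3. ((-l) ^ m) / fact m) = 1 - l + l\<^sup>2 / 2"
    by (simp add: numeral_3_eq_3 power2_eq_square)
  moreover have "(exp t / fact 3) * (-l) ^ 3 \<le> 0"
    using l by (intro mult_nonneg_nonpos) (auto simp: power_odd_eq)
  ultimately show ?thesis using t by simp
qed

lemma exp_minus_one_le: "0 \<le> (x::real) \<Longrightarrow> exp x - 1 \<le> x * exp x"
proof -
  assume "0 \<le> x"
  have "1 - x \<le> exp (-x)" by (rule exp_minus_ge)
  then have "(1 - x) * exp x \<le> exp (-x) * exp x" by (intro mult_right_mono) auto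
  then show ?thesis by (simp add: exp_minus field_simps)
qed

lemma sq_exp_bound: "0 \<le> (y::real) \<Longrightarrow> y\<^sup>2 * exp (- y / 4) \<le> 32"
proof -
  assume y: "0 \<le> y"
  have "1 + y/4 + (y/4)\<^sup>2 / 2 \<le> exp (y/4)" using y by (intro exp_lower_Taylor_quadratic) simp
  then have "y\<^sup>2 \<le> 32 * exp (y/4)" using y by (simp add: power2_eq_square)
  then have "y\<^sup>2 * exp (- y / 4) \<le> 32 * exp (y/4) * exp (- y / 4)" by (intro mult_right_mono) auto
  then show ?thesis by (simp add: exp_minus field_simps)
qed

lemma exp_neg_inv: "0 < (y::real) \<Longrightarrow> exp (- y) \<le> 1 / y"
proof -
  assume y: "0 < y"
  have "y \<le> exp y" using exp_ge_add_one_self[of y] by linarith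
  then show ?thesis using y by (simp add: exp_minus field_simps)
qed


lemma small_case_analysis:
  fixes R p e :: real
  assumes e: "0 < e" "e < 1" and L: "64 \<le> R * e\<^sup>2" and p: "0 \<le> p" "p \<le> e / 4"
  shows "(exp (R * p * (exp 1 - 1)) - 1) / (exp (R * (p + e)) - 1) \<le> 2 * p * exp (- (R * e\<^sup>2) / 16)"
proof -
  define M where "M = R * e"
  define L where "L = R * e\<^sup>2"
  have R: "R > 0" using L e by (smt (verit) mult_nonpos_nonneg zero_le_power2)
  have LM: "L = M * e" unfolding L_def M_def by (simp add: power2_eq_square)
  have MLle: "L \<le> M" using LM e R unfolding M_def by (simp add: mult_left_le)
  have L64: "64 \<le> L" using L unfolding L_def .
  have M64: "64 \<le> M" using MLle L64 by simp
  have e2: "exp 1 - 1 \<le> (2::real)" using exp_le by linarith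
  have x0: "0 \<le> R * p * (exp 1 - 1)" using R p by (simp add: exp_ge_zero)
  have x1: "R * p * (exp 1 - 1) \<le> M / 2"
  proof -
    have "R * p * (exp 1 - 1) \<le> R * p * 2" using R p e2 by (intro mult_left_mono) auto
    also have "\<dots> \<le> R * (e/4) * 2" using R p by (intro mult_right_mono mult_left_mono) auto
    finally show ?thesis unfolding M_def by simp
  qed
  have num: "exp (R * p * (exp 1 - 1)) - 1 \<le> 2 * R * p * exp (M / 2)"
  proof -
    have "exp (R * p * (exp 1 - 1)) - 1 \<le> R * p * (exp 1 - 1) * exp (R * p * (exp 1 - 1))"
      by (rule exp_minus_one_le[OF x0])
    also have "\<dots> \<le> (2 * R * p) * exp (M / 2)"
    proof (rule mult_mono)
      have "(R * p) * (exp 1 - 1) \<le> (R * p) * 2" using R p e2 by (intro mult_left_mono) auto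
      then show "R * p * (exp 1 - 1) \<le> 2 * R * p" by simp
      show "exp (R * p * (exp 1 - 1)) \<le> exp (M / 2)" using x1 by simp
    qed (use R p in auto)
    finally show ?thesis by simp
  qed
  have den: "exp M / 2 \<le> exp (R * (p + e)) - 1"
  proof -
    have "exp M \<le> exp (R * (p + e))" using R p unfolding M_def by (simp add: distrib_left)
    moreover have "2 \<le> exp M" using M64 exp_ge_add_one_self[of M] by linarith
    ultimately show ?thesis by linarith
  qed
  have dpos: "0 < exp M / 2" by simp
  have "(exp (R * p * (exp 1 - 1)) - 1) / (exp (R * (p + e)) - 1) \<le> (2 * R * p * exp (M / 2)) / (exp M / 2)"
    using num den dpos x0 R p by (intro frac_le) (auto simp: add_nonneg_nonneg)
  also have "\<dots> = 4 * R * p * exp (- M / 2)"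
    by (simp add: field_simps exp_minus exp_add[symmetric] flip: exp_diff)
  also have "4 * R * p * exp (- M / 2) = 4 * p / L * (M\<^sup>2 * exp (- M / 4)) * exp (- M / 4)"
  proof -
    have RM: "R = M\<^sup>2 / L" using LM e R unfolding M_def by (simp add: power2_eq_square field_simps)
    show ?thesis unfolding RM by (simp add: field_simps exp_add[symmetric])
  qed
  also have "\<dots> \<le> 4 * p / L * 32 * exp (- L / 4)"
    using sq_exp_bound[of M] M64 MLle p L64
    by (intro mult_mono) (auto)
  also have "\<dots> \<le> 2 * p * exp (- L / 16)"
  proof -
    have h1: "4 * p / L * 32 \<le> 2 * p" using L64 p mult_right_mono[OF L64 p(1)] by (simp add: field_simps)
    have h2: "exp (- L / 4) \<le> exp (- L / 16)" using L64 by simp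
    show ?thesis by (rule mult_mono[OF h1 h2]) (use p L64 in auto)
  qed
  finally show ?thesis unfolding L_def by simp
qed


lemma large_case_analysis:
  fixes R p e :: real
  assumes L: "64 \<le> R * e\<^sup>2" and p: "0 < p" "p \<le> 1"
  shows "2 * exp (- (R * e\<^sup>2) / (8 * p)) \<le> 2 * p * exp (- (R * e\<^sup>2) / 16)"
proof -
  define L where "L = R * e\<^sup>2"
  have L64: "64 \<le> L" using L unfolding L_def .
  have "exp (- L / (8 * p)) = exp (- L / (16 * p)) * exp (- L / (16 * p))"
    by (simp add: exp_add[symmetric] field_simps)
  also have "\<dots> \<le> exp (- L / 16) * (16 * p / L)"
  proof (rule mult_mono)
    have "L / 16 \<le> L / (16 * p)" using p L64 by (simp add: field_simps mult_left_le)
    then show "exp (- L / (16 * p)) \<le> exp (- L / 16)" by simp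
    have "exp (- (L / (16 * p))) \<le> 1 / (L / (16 * p))" using p L64 by (intro exp_neg_inv) simp
    then show "exp (- L / (16 * p)) \<le> 16 * p / L" by simp
  qed (use p L64 in auto)
  finally have "2 * exp (- L / (8 * p)) \<le> 2 * (exp (- L / 16) * (16 * p / L))" by simp
  also have "\<dots> \<le> 2 * p * exp (- L / 16)"
  proof -
    have h: "16 * p / L \<le> p" using p L64 by (simp add: field_simps)
    have "2 * exp (- L / 16) * (16 * p / L) \<le> 2 * exp (- L / 16) * p"
      by (rule mult_left_mono[OF h]) simp
    then show ?thesis by (simp add: mult_ac)
  qed
  finally show ?thesis unfolding L_def by simp
qed

lemma upper_exponent:
  fixes R p e :: real
  assumes e: "0 < e" and R: "0 \<le> R" and p: "e / 4 < p"
  defines "l \<equiv> min 1 (e / (2 * p))"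
  shows "R * p * (exp l - 1) - l * (R * (p + e)) \<le> - (R * e\<^sup>2) / (8 * p)"
proof -
  have p0: "0 < p" using p e by linarith
  have l: "0 \<le> l" "l \<le> 1" using e p0 unfolding l_def by auto
  have "exp l - 1 \<le> l + l\<^sup>2" using exp_bound[OF l] by simp
  then have "R * p * (exp l - 1) \<le> R * p * (l + l\<^sup>2)" using R p0 by (intro mult_left_mono) auto
  then have "R * p * (exp l - 1) - l * (R * (p + e)) \<le> R * (p * l\<^sup>2 - l * e)"
    by (simp add: algebra_simps power2_eq_square)
  also have "\<dots> \<le> - (R * e\<^sup>2) / (8 * p)"
  proof (cases "e \<le> 2 * p")
    case True
    then have lE: "l = e / (2 * p)" unfolding l_def using p0 by auto
    have "p * l\<^sup>2 - l * e = - (e\<^sup>2 / (4 * p))" unfolding lE using p0 by (simp add: field_simps power2_eq_square)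
    then have "R * (p * l\<^sup>2 - l * e) = - (R * e\<^sup>2) / (4 * p)" by simp
    also have "\<dots> \<le> - (R * e\<^sup>2) / (8 * p)" using R p0 by (simp add: field_simps)
    finally show ?thesis .
  next
    case False
    then have "l = 1" unfolding l_def using p0 by auto
    have key: "8 * p * (p - e) \<le> - e\<^sup>2"
    proof -
      have A: "(p - e / 4) * (p - e / 2) \<le> 0" using p False by (intro mult_nonneg_nonpos) auto
      have B: "8 * p * (p - e) = 8 * (p * p) - 8 * (e * p)" by (simp add: algebra_simps)
      have C: "(p - e / 4) * (p - e / 2) = p * p - 3 / 4 * (e * p) + (e * e) / 8" by (simp add: algebra_simps)
      have D: "0 < e * p" using p0 e by simp
      have "8 * p * (p - e) \<le> - (e * e)" using A B C D by linarith
      then show ?thesis by (simp add: power2_eq_square)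
    qed
    have "p * l\<^sup>2 - l * e = p - e" using \<open>l = 1\<close> by simp
    also have "\<dots> \<le> - e\<^sup>2 / (8 * p)" using key p0 by (simp add: field_simps)
    finally have h: "p * l\<^sup>2 - l * e \<le> - e\<^sup>2 / (8 * p)" .
    have "R * (p * l\<^sup>2 - l * e) \<le> R * (- e\<^sup>2 / (8 * p))" by (rule mult_left_mono[OF h R])
    then show ?thesis by simp
  qed
  finally show ?thesis .
qed

lemma lower_exponent:
  fixes R p e :: real
  assumes e: "0 < e" and R: "0 \<le> R" and p: "e < p"
  shows "R * p * (exp (- (e / p)) - 1) + (e / p) * (R * (p - e)) \<le> - (R * e\<^sup>2) / (8 * p)"
proof -
  have p0: "0 < p" using p e by linarith
  define l where "l = e / p"
  have l0: "0 \<le> l" using e p0 unfolding l_def by simp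
  have "exp (- l) - 1 \<le> - l + l\<^sup>2 / 2" using exp_neg_quad[OF l0] by simp
  then have "R * p * (exp (- l) - 1) \<le> R * p * (- l + l\<^sup>2 / 2)" using R p0 by (intro mult_left_mono) auto
  then have "R * p * (exp (- l) - 1) + l * (R * (p - e)) \<le> R * (p * l\<^sup>2 / 2 - l * e)"
    by (simp add: algebra_simps power2_eq_square)
  also have "p * l\<^sup>2 / 2 - l * e = - (e\<^sup>2 / (2 * p))" unfolding l_def using p0 by (simp add: field_simps power2_eq_square)
  also have "R * - (e\<^sup>2 / (2 * p)) \<le> - (R * e\<^sup>2) / (8 * p)" using R p0 by (simp add: field_simps)
  finally show ?thesis unfolding l_def .
qed


lemma vertex_bound:
  fixes Q :: "'b pmf" and P :: "'b \<Rightarrow> bool" and r :: nat and e :: real and d :: 'b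
  assumes e: "0 < e" "e < 1" and L: "64 \<le> real r * e\<^sup>2"
  shows "measure_pmf.prob (Pi_pmf {..<r} d (\<lambda>_. Q))
           {T. e < \<bar>measure_pmf.prob Q {x. P x} - cnt P r T / real r\<bar>}
         \<le> 2 * measure_pmf.prob Q {x. P x} * exp (- (real r * e\<^sup>2) / 16)"
proof -
  define p where "p = measure_pmf.prob Q {x. P x}"
  define R where "R = real r"
  define M where "M = Pi_pmf {..<r} d (\<lambda>_. Q)"
  have "real r \<noteq> 0" using L by (intro notI) simp
  then have R: "R > 0" unfolding R_def by simp
  have p01: "0 \<le> p" "p \<le> 1" unfolding p_def by auto
  define U where "U = {T. R * (p + e) \<le> cnt P r T}"
  define Lo where "Lo = {T. cnt P r T < R * (p - e)}"
  have sub: "{T. e < \<bar>p - cnt P r T / R\<bar>} \<subseteq> U \<union> Lo"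
  proof
    fix T assume "T \<in> {T. e < \<bar>p - cnt P r T / R\<bar>}"
    then have "e < p - cnt P r T / R \<or> e < cnt P r T / R - p" by auto
    then show "T \<in> U \<union> Lo"
    proof
      assume "e < p - cnt P r T / R"
      then have "cnt P r T / R < p - e" by simp
      then have "cnt P r T < R * (p - e)" using R by (simp add: field_simps)
      then show ?thesis unfolding Lo_def by simp
    next
      assume "e < cnt P r T / R - p"
      then have "p + e < cnt P r T / R" by simp
      then have "R * (p + e) < cnt P r T" using R by (simp add: field_simps)
      then show ?thesis unfolding U_def by simp
    qed
  qed
  have "measure_pmf.prob M {T. e < \<bar>p - cnt P r T / R\<bar>} \<le> measure_pmf.prob M (U \<union> Lo)"
    by (rule measure_pmf.finite_measure_mono[OF sub]) simp
  also have "\<dots> \<le> measure_pmf.prob M U + measure_pmf.prob M Lo"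
    by (rule measure_Un_le) simp_all
  also have "\<dots> \<le> 2 * p * exp (- (R * e\<^sup>2) / 16)"
  proof (cases "p \<le> e / 4")
    case True
    have neg: "R * (p - e) < 0" using R True e by (intro mult_pos_neg) auto
    have "\<not> cnt P r T < R * (p - e)" for T using cnt_bounds(1)[of P r T] neg by linarith
    then have "Lo = {}" unfolding Lo_def by blast
    then have h0: "measure_pmf.prob M Lo = 0" by simp
    have "0 < p + e" using p01 e by linarith
    from mult_pos_pos[OF R this] have "0 < R * (p + e)" .
    then have apos: "0 < real r * (measure_pmf.prob Q {x. P x} + e)" unfolding R_def p_def .
    have h1: "measure_pmf.prob M U \<le> (exp (R * p * (exp 1 - 1)) - 1) / (exp (R * (p + e)) - 1)"
      unfolding M_def U_def p_def R_def
      by (rule small_tail[OF apos])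
    have h2: "(exp (R * p * (exp 1 - 1)) - 1) / (exp (R * (p + e)) - 1) \<le> 2 * p * exp (- (R * e\<^sup>2) / 16)"
      by (rule small_case_analysis) (use e L True p01 in \<open>auto simp: R_def\<close>)
    from h0 h1 h2 show ?thesis by simp
  next
    case False
    then have p0: "0 < p" using e by linarith
    define l where "l = min 1 (e / (2 * p))"
    have "measure_pmf.prob M U \<le> exp (R * p * (exp l - 1) - l * (R * (p + e)))"
      unfolding M_def U_def p_def R_def
      by (rule upper_tail) (use e p0 in \<open>auto simp: l_def\<close>)
    also have "\<dots> \<le> exp (- (R * e\<^sup>2) / (8 * p))"
      unfolding l_def using upper_exponent[of e R p] e R False by simp
    finally have hU: "measure_pmf.prob M U \<le> exp (- (R * e\<^sup>2) / (8 * p))" .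
    have hL: "measure_pmf.prob M Lo \<le> exp (- (R * e\<^sup>2) / (8 * p))"
    proof (cases "p \<le> e")
      case True
      have neg: "R * (p - e) \<le> 0" using R True by (intro mult_nonneg_nonpos) auto
      have "\<not> cnt P r T < R * (p - e)" for T using cnt_bounds(1)[of P r T] neg by linarith
      then have "Lo = {}" unfolding Lo_def by blast
      then show ?thesis by simp
    next
      case False
      have "measure_pmf.prob M Lo \<le> measure_pmf.prob M {T. cnt P r T \<le> R * (p - e)}"
        unfolding Lo_def by (rule measure_pmf.finite_measure_mono) auto
      also have "\<dots> \<le> exp (R * p * (exp (- (e / p)) - 1) + (e / p) * (R * (p - e)))"
        unfolding M_def p_def R_def
        by (rule lower_tail) (use e p0 in \<open>auto simp: p_def\<close>)
      also have "\<dots> \<le> exp (- (R * e\<^sup>2) / (8 * p))"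
        using lower_exponent[of e R p] e R False by simp
      finally show ?thesis .
    qed
    have "measure_pmf.prob M U + measure_pmf.prob M Lo \<le> 2 * exp (- (R * e\<^sup>2) / (8 * p))"
      using hU hL by simp
    also have "\<dots> \<le> 2 * p * exp (- (R * e\<^sup>2) / 16)"
      by (rule large_case_analysis) (use L p0 p01 in \<open>auto simp: R_def\<close>)
    finally show ?thesis .
  qed
  finally show ?thesis unfolding M_def p_def R_def .
qed


lemma card_pairs:
  assumes "finite V"
  shows "real (card {(s, t). s \<in> V \<and> t \<in> V \<and> (s::'a) \<noteq> t}) = real (card V) * (real (card V) - 1)"
proof -
  have eq: "{(s, t). s \<in> V \<and> t \<in> V \<and> s \<noteq> t} = V \<times> V - (\<lambda>x. (x, x)) ` V" by auto
  have sub: "(\<lambda>x. (x, x)) ` V \<subseteq> V \<times> V" by auto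
  have ci: "card ((\<lambda>x. (x, x)) ` V) = card V" by (rule card_image) (auto simp: inj_on_def)
  have "card {(s, t). s \<in> V \<and> t \<in> V \<and> s \<noteq> t} = card V * card V - card V"
    unfolding eq using card_Diff_subset[OF finite_imageI[OF assms] sub] ci assms
    by (simp add: card_cartesian_product)
  moreover have "card V \<le> card V * card V" by (cases "card V") auto
  ultimately show ?thesis by (simp add: of_nat_diff algebra_simps)
qed

lemma connected_mono: "connected_graph V E \<Longrightarrow> E \<subseteq> E' \<Longrightarrow> connected_graph V E'"
  unfolding connected_graph_def using rtrancl_mono by blast

lemma prob_internal_eq_betweenness:
  assumes G: "undirected_graph V E" "connected_graph V E" "card V \<ge> 2" and v: "v \<in> V"
  shows "measure_pmf.prob (path_sampling V E) {x. internal v x} = betweenness V E v"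
proof -
  have fV: "finite V" using G(1) by (simp add: undirected_graph_def)
  define P where "P = {(s, t). s \<in> V \<and> t \<in> V \<and> s \<noteq> t}"
  define Pv where "Pv = {(s, t). s \<in> V \<and> t \<in> V \<and> s \<noteq> t \<and> s \<noteq> v \<and> t \<noteq> v}"
  define A where "A = {x. internal v x}"
  have SPfin: "finite (shortest_paths E s t)" if "s \<in> V" for s t
    using SP_finite[of V E s t] G(1) that by (auto simp: undirected_graph_def)
  have SPne: "shortest_paths E s t \<noteq> {}" if st: "s \<in> V" "t \<in> V" for s t
  proof -
    obtain w where w: "walk E w" "hd w = s" "last w = t" using conn_walk[OF G(2) st] by blast
    show ?thesis by (rule SP_nonempty[OF w])
  qed
  let ?f = "\<lambda>(s, t). pmf_of_set (shortest_paths E s t)"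
  have "measure_pmf.prob (path_sampling V E) A = measure_pmf.expectation (path_sampling V E) (indicator A)"
    by simp
  also have "\<dots> = (\<Sum>a\<in>P. measure_pmf.expectation (?f a) (indicator A) /\<^sub>R real (card P))"
    unfolding path_sampling_def P_def
    by (rule pmf_expectation_bind_pmf_of_set)
       (use pairs_finite[OF fV] pairs_nonempty[OF fV G(3)] SPfin SPne in auto)
  also have "\<dots> = (\<Sum>a\<in>P. (case a of (s, t) \<Rightarrow> real (card (shortest_paths E s t \<inter> A)) / real (sigma E s t))) / real (card P)"
    by (simp add: sum_divide_distrib split_def measure_pmf_of_set SPfin SPne P_def sigma_def
        split: prod.splits cong: sum.cong) (auto intro!: sum.cong simp: P_def SPfin SPne measure_pmf_of_set sigma_def inverse_eq_divide divide_divide_eq_left mult.commute)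
  also have "(\<Sum>a\<in>P. (case a of (s, t) \<Rightarrow> real (card (shortest_paths E s t \<inter> A)) / real (sigma E s t))) =
             (\<Sum>a\<in>Pv. (case a of (s, t) \<Rightarrow> real (sigma_via E s t v) / real (sigma E s t)))"
  proof (rule sum.mono_neutral_cong_right)
    show "finite P" unfolding P_def by (rule pairs_finite[OF fV])
    show "Pv \<subseteq> P" unfolding P_def Pv_def by auto
    show "\<forall>a\<in>P - Pv. (case a of (s, t) \<Rightarrow> real (card (shortest_paths E s t \<inter> A)) / real (sigma E s t)) = 0"
    proof
      fix a assume aP: "a \<in> P - Pv"
      obtain s t where a: "a = (s, t)" and "s = v \<or> t = v" using aP unfolding P_def Pv_def by auto
      then have "shortest_paths E s t \<inter> A = {}"
        unfolding A_def internal_def shortest_paths_def by auto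
      then show "(case a of (s, t) \<Rightarrow> real (card (shortest_paths E s t \<inter> A)) / real (sigma E s t)) = 0"
        using a by simp
    qed
    show "(case a of (s, t) \<Rightarrow> real (card (shortest_paths E s t \<inter> A)) / real (sigma E s t)) =
          (case a of (s, t) \<Rightarrow> real (sigma_via E s t v) / real (sigma E s t))" if aPv: "a \<in> Pv" for a
    proof -
      obtain s t where a: "a = (s, t)" and "s \<noteq> v" "t \<noteq> v" using aPv unfolding Pv_def by auto
      then have "shortest_paths E s t \<inter> A = {p \<in> shortest_paths E s t. v \<in> set p}"
        unfolding A_def internal_def shortest_paths_def by auto
      then show ?thesis using a by (simp add: sigma_via_def)
    qed
  qed
  finally show ?thesis
    unfolding betweenness_def A_def Pv_def[symmetric] using card_pairs[OF fV, of]
    by (simp add: P_def)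
qed


lemma zero_prob_case:
  fixes Q :: "'b pmf" and d :: 'b
  assumes "measure_pmf.prob Q {x. P x} = 0" "0 < e"
  shows "measure_pmf.prob (Pi_pmf {..<r} d (\<lambda>_. Q))
           {T. e < \<bar>measure_pmf.prob Q {x. P x} - cnt P r T / real r\<bar>} = 0"
proof -
  have nP: "\<not> P x" if "x \<in> set_pmf Q" for x
    using assms(1) that unfolding measure_pmf_zero_iff by blast
  have "cnt P r T = 0" if "T \<in> set_pmf (Pi_pmf {..<r} d (\<lambda>_. Q))" for T
  proof -
    have "\<forall>i<r. T i \<in> set_pmf Q" using that by (simp add: set_Pi_pmf PiE_dflt_def)
    then have "{i\<in>{..<r}. P (T i)} = {}" using nP by auto
    then show ?thesis unfolding cnt_def by simp
  qed
  then show ?thesis unfolding measure_pmf_zero_iff using assms by auto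
qed

lemma VD_finite:
  assumes "finite V"
  shows "finite {length p | p s t. s \<in> V \<and> t \<in> V \<and> p \<in> shortest_paths E s t}"
proof -
  have "{length p | p s t. s \<in> V \<and> t \<in> V \<and> p \<in> shortest_paths E s t} \<subseteq>
        (\<lambda>(s, t). Suc (dist_g E s t)) ` (V \<times> V)"
    by (auto simp: shortest_paths_def)
  moreover have "finite ((\<lambda>(s, t). Suc (dist_g E s t)) ` (V \<times> V))" using assms by simp
  ultimately show ?thesis by (rule finite_subset)
qed

lemma support_props:
  assumes G: "undirected_graph V E" "undirected_graph V E'" "E \<subseteq> E'" "connected_graph V E"
    "card V \<ge> 2" and x: "x \<in> set_pmf (path_sampling V E')"
  shows "length x \<le> vertex_diameter V E" "hd x \<noteq> last x" "x \<noteq> []"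
proof -
  have fV: "finite V" using G(1) by (simp add: undirected_graph_def)
  obtain s t where st: "s \<in> V" "t \<in> V" "s \<noteq> t" and xs: "x \<in> shortest_paths E' s t"
    using x set_pmf_sampling[OF G(2) connected_mono[OF G(4,3)] G(5)] by auto
  show "hd x \<noteq> last x" "x \<noteq> []" using SP_props[OF xs] st by (auto simp: walk_def)
  obtain w where w: "walk E w" "hd w = s" "last w = t" using conn_walk[OF G(4) st(1,2)] by blast
  obtain y where y: "walk E y" "hd y = s" "last y = t" "length y = Suc (dist_g E s t)"
    using dist_witness[OF w] by blast
  have yS: "y \<in> shortest_paths E s t" using y by (simp add: shortest_paths_def)
  have "length x = Suc (dist_g E' s t)" using SP_props[OF xs] by simp
  also have "\<dots> \<le> Suc (dist_g E s t)" using dist_mono[OF G(3) w] by simp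
  also have "\<dots> = length y" using y by simp
  also have "\<dots> \<le> vertex_diameter V E" unfolding vertex_diameter_def
    by (rule Max_ge[OF VD_finite[OF fV]]) (use st yS in blast)
  finally show "length x \<le> vertex_diameter V E" .
qed

lemma internal_count:
  assumes "hd x \<noteq> last x" "x \<noteq> []"
  shows "card {v\<in>V. internal v x} \<le> length x - 2"
proof -
  have sub: "{v\<in>V. internal v x} \<subseteq> set x - {hd x, last x}" by (auto simp: internal_def)
  have hs: "{hd x, last x} \<subseteq> set x" using assms by auto
  have "card {v\<in>V. internal v x} \<le> card (set x - {hd x, last x})"
    by (rule card_mono[OF _ sub]) simp
  also have "\<dots> = card (set x) - 2" using card_Diff_subset[OF _ hs] assms by simp
  also have "\<dots> \<le> length x - 2" using card_length[of x] by simp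
  finally show ?thesis .
qed

lemma sum_prob_bound:
  assumes G: "undirected_graph V E" "undirected_graph V E'" "E \<subseteq> E'" "connected_graph V E"
    "card V \<ge> 2"
  shows "(\<Sum>v\<in>V. measure_pmf.prob (path_sampling V E') {x. internal v x}) \<le> real (vertex_diameter V E - 2)"
proof -
  let ?M = "path_sampling V E'"
  have fV: "finite V" using G(1) by (simp add: undirected_graph_def)
  have int: "integrable (measure_pmf ?M) (indicator {x. internal v x} :: _ \<Rightarrow> real)" for v
    by (rule integrable_pmf_bounded[where B=1]) (auto simp: indicator_def)
  have "(\<Sum>v\<in>V. measure_pmf.prob ?M {x. internal v x}) =
        (\<Sum>v\<in>V. measure_pmf.expectation ?M (indicator {x. internal v x}))" by simp
  also have "\<dots> = measure_pmf.expectation ?M (\<lambda>x. \<Sum>v\<in>V. indicator {x. internal v x} x)"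
    by (rule sym, rule Bochner_Integration.integral_sum) (rule int)
  also have "\<dots> \<le> measure_pmf.expectation ?M (\<lambda>x. real (vertex_diameter V E - 2))"
  proof (rule integral_mono_AE)
    show "integrable (measure_pmf ?M) (\<lambda>x. \<Sum>v\<in>V. indicator {x. internal v x} x :: real)"
      using int by (intro Bochner_Integration.integrable_sum) auto
    show "integrable (measure_pmf ?M) (\<lambda>x. real (vertex_diameter V E - 2))" by simp
    show "AE x in measure_pmf ?M. (\<Sum>v\<in>V. indicator {x. internal v x} x) \<le> real (vertex_diameter V E - 2)"
    proof (rule AE_pmfI)
      fix x assume x: "x \<in> set_pmf ?M"
      note sp = support_props[OF G x]
      have "(\<Sum>v\<in>V. indicator {x. internal v x} x :: real) = real (card {v\<in>V. internal v x})"
        using fV by (simp add: indicator_def sum.If_cases Int_def)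
      also have "\<dots> \<le> real (length x - 2)" using internal_count[OF sp(2,3), of V] by simp
      also have "\<dots> \<le> real (vertex_diameter V E - 2)" using sp(1) by simp
      finally show "(\<Sum>v\<in>V. indicator {x. internal v x} x) \<le> real (vertex_diameter V E - 2)" .
    qed
  qed
  also have "\<dots> = real (vertex_diameter V E - 2)" by simp
  finally show ?thesis .
qed


lemma final_arith:
  fixes e d k :: real
  assumes e: "0 < e" "e < 1" and d: "0 < d" "d < 1" and k: "1 \<le> k"
    and r: "real r \<ge> 128 / e\<^sup>2 * (real_of_int \<lfloor>log 2 k\<rfloor> + 1 + ln (1 / d))"
  shows "64 \<le> real r * e\<^sup>2" "2 * k * exp (- (real r * e\<^sup>2) / 16) < d"
proof -
  define A where "A = real_of_int \<lfloor>log 2 k\<rfloor> + 1"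
  define L where "L = real r * e\<^sup>2"
  have lk: "0 \<le> log 2 k" using k by simp
  have A1: "1 \<le> A" unfolding A_def using lk by simp
  have Alog: "log 2 k \<le> A" unfolding A_def by linarith
  have lnk: "ln k \<le> log 2 k"
  proof -
    have "0 \<le> ln k" using k by simp
    moreover have "0 < ln (2::real)" "ln (2::real) < 1" using ln_2_less_1 by auto
    ultimately have "ln k * ln 2 \<le> ln k" by (simp add: mult_left_le)
    then show ?thesis unfolding log_def using \<open>0 < ln 2\<close> by (simp add: field_simps)
  qed
  have ld: "0 < ln (1 / d)" using d by simp
  have "L \<ge> 128 * (A + ln (1 / d))"
  proof -
    have "L = real r * e\<^sup>2" by (simp add: L_def)
    also have "\<dots> \<ge> 128 / e\<^sup>2 * (A + ln (1 / d)) * e\<^sup>2"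
      using r e by (intro mult_right_mono) (auto simp: A_def)
    finally show ?thesis using e by simp
  qed
  then have L1: "L \<ge> 128 * A + 128 * ln (1 / d)" by (simp add: algebra_simps)
  then show "64 \<le> real r * e\<^sup>2" using A1 ld unfolding L_def by linarith
  have "L / 16 \<ge> ln k + 1 + ln (1 / d)" using L1 A1 Alog lnk ld by linarith
  then have "exp (- L / 16) \<le> exp (- (ln k + 1 + ln (1 / d)))" by simp
  also have "\<dots> = d / (k * exp 1)"
    using k d by (simp add: exp_minus exp_add exp_diff field_simps)
  finally have h: "exp (- L / 16) \<le> d / (k * exp 1)" .
  have "2 * k * exp (- L / 16) \<le> 2 * k * (d / (k * exp 1))"
    by (rule mult_left_mono[OF h]) (use k in simp)
  also have "\<dots> = 2 * d / exp 1" using k by simp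
  also have "\<dots> < d"
  proof -
    have "2 < exp (1::real)" using exp_ge_add_one_self[of 1] exp_gt_zero ln_2_less_1
      by (metis exp_less_cancel_iff exp_ln zero_less_numeral)
    then show ?thesis using d by (simp add: field_simps)
  qed
  finally show "2 * k * exp (- (real r * e\<^sup>2) / 16) < d" unfolding L_def by simp
qed


theorem theorem1:
  "\<exists>c::real. c > 0 \<and>
    (\<forall>(V::nat set) (E::(nat \<times> nat) set) (\<beta>::(nat \<times> nat) set) (D::nat) (\<epsilon>::real) (\<delta>::real).
      undirected_graph V E \<and> undirected_graph V (E \<union> \<beta>) \<and> connected_graph V E \<and>
      card V \<ge> 2 \<and> vertex_diameter V E \<le> D \<and>
      0 < \<epsilon> \<and> \<epsilon> < 1 \<and> 0 < \<delta> \<and> \<delta> < 1 \<longrightarrow>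
      (let r = sample_size c \<epsilon> \<delta> D;
           S' = sample_set r (path_sampling V E) \<bind> updated_sample r E (E \<union> \<beta>)
       in measure_pmf.prob S'
            {T. \<exists>v\<in>V. \<bar>betweenness V (E \<union> \<beta>) v - approx_betweenness r T v\<bar> > \<epsilon>} < \<delta>))"
proof (intro exI[of _ 128] conjI allI impI)
  show "(0::real) < 128" by simp
  fix V :: "nat set" and E \<beta> :: "(nat \<times> nat) set" and D :: nat and e d :: real
  assume H: "undirected_graph V E \<and> undirected_graph V (E \<union> \<beta>) \<and> connected_graph V E \<and>
      card V \<ge> 2 \<and> vertex_diameter V E \<le> D \<and> 0 < e \<and> e < 1 \<and> 0 < d \<and> d < 1"
  define E' where "E' = E \<union> \<beta>"
  have G: "undirected_graph V E" "undirected_graph V E'" "E \<subseteq> E'" "connected_graph V E" "card V \<ge> 2"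
    using H unfolding E'_def by auto
  have VD: "vertex_diameter V E \<le> D" and e: "0 < e" "e < 1" and d: "0 < d" "d < 1" using H by auto
  have fV: "finite V" using G(1) by (simp add: undirected_graph_def)
  have G': "connected_graph V E'" by (rule connected_mono[OF G(4,3)])
  define r where "r = sample_size 128 e d D"
  define Q where "Q = path_sampling V E'"
  define p where "p = (\<lambda>v. measure_pmf.prob Q {x. internal v x})"
  define M where "M = Pi_pmf {..<r} [] (\<lambda>_. Q)"
  define B where "B = (\<lambda>v. {T. e < \<bar>measure_pmf.prob Q {x. internal v x} - cnt (internal v) r T / real r\<bar>})"
  have S'eq: "sample_set r (path_sampling V E) \<bind> updated_sample r E E' = M"
    unfolding M_def Q_def by (rule S'_eq[OF G(1-5)])
  have bet: "betweenness V E' v = p v" if "v \<in> V" for v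
    unfolding p_def Q_def by (rule prob_internal_eq_betweenness[OF G(2) G' G(5) that, symmetric])
  have apx: "approx_betweenness r T v = cnt (internal v) r T / real r" for T v
    by (simp add: approx_betweenness_def cnt_def)
  have ev: "{T. \<exists>v\<in>V. \<bar>betweenness V E' v - approx_betweenness r T v\<bar> > e} \<subseteq> (\<Union>v\<in>V. B v)"
    unfolding B_def by (auto simp: apx bet p_def)
  have "measure_pmf.prob M {T. \<exists>v\<in>V. \<bar>betweenness V E' v - approx_betweenness r T v\<bar> > e}
        \<le> measure_pmf.prob M (\<Union>v\<in>V. B v)"
    by (rule measure_pmf.finite_measure_mono[OF ev]) simp
  also have "\<dots> \<le> (\<Sum>v\<in>V. measure_pmf.prob M (B v))"
    by (rule measure_pmf.finite_measure_subadditive_finite) (use fV in auto)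
  also have "\<dots> < d"
  proof (cases "D \<le> 2")
    case True
    have sp: "(\<Sum>v\<in>V. p v) \<le> 0"
      using sum_prob_bound[OF G] VD True unfolding p_def Q_def by simp
    have p0: "p v = 0" if "v \<in> V" for v
    proof -
      have "\<forall>v\<in>V. 0 \<le> p v" unfolding p_def by simp
      moreover have "sum p V = 0" using sp \<open>\<forall>v\<in>V. 0 \<le> p v\<close> by (meson antisym sum_nonneg)
      ultimately show ?thesis using sum_nonneg_eq_0_iff[OF fV] that by blast
    qed
    have "measure_pmf.prob M (B v) = 0" if "v \<in> V" for v
      unfolding M_def B_def by (rule zero_prob_case) (use p0[OF that] e in \<open>auto simp: p_def\<close>)
    then have "(\<Sum>v\<in>V. measure_pmf.prob M (B v)) = 0" by simp
    then show ?thesis using d by simp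
  next
    case False
    define k where "k = real D - 2"
    have k1: "1 \<le> k" using False unfolding k_def by simp
    have Bpos: "0 < real_of_int \<lfloor>log 2 k\<rfloor> + 1 + ln (1 / d)"
    proof -
      have "0 \<le> log 2 k" using k1 by simp
      then have "0 \<le> real_of_int \<lfloor>log 2 k\<rfloor>" by simp
      moreover have "0 < ln (1 / d)" using d by simp
      ultimately show ?thesis by linarith
    qed
    have rge: "real r \<ge> 128 / e\<^sup>2 * (real_of_int \<lfloor>log 2 k\<rfloor> + 1 + ln (1 / d))"
    proof -
      have "128 / e\<^sup>2 * (real_of_int \<lfloor>log 2 k\<rfloor> + 1 + ln (1 / d)) \<le>
            real_of_int \<lceil>128 / e\<^sup>2 * (real_of_int \<lfloor>log 2 k\<rfloor> + 1 + ln (1 / d))\<rceil>"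
        by (rule le_of_int_ceiling)
      also have "\<dots> = real (nat \<lceil>128 / e\<^sup>2 * (real_of_int \<lfloor>log 2 k\<rfloor> + 1 + ln (1 / d))\<rceil>)"
      proof -
        have "0 \<le> 128 / e\<^sup>2 * (real_of_int \<lfloor>log 2 k\<rfloor> + 1 + ln (1 / d))"
          using Bpos by (intro mult_nonneg_nonneg) auto
        then have "0 \<le> \<lceil>128 / e\<^sup>2 * (real_of_int \<lfloor>log 2 k\<rfloor> + 1 + ln (1 / d))\<rceil>"
          by linarith
        then show ?thesis by simp
      qed
      finally show ?thesis unfolding r_def sample_size_def k_def .
    qed
    note fa = final_arith[OF e d k1 rge]
    have vb: "measure_pmf.prob M (B v) \<le> 2 * p v * exp (- (real r * e\<^sup>2) / 16)" for v
      unfolding M_def B_def p_def by (rule vertex_bound[OF e fa(1)])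
    have "(\<Sum>v\<in>V. measure_pmf.prob M (B v)) \<le> (\<Sum>v\<in>V. 2 * p v * exp (- (real r * e\<^sup>2) / 16))"
      by (rule sum_mono) (rule vb)
    also have "\<dots> = 2 * exp (- (real r * e\<^sup>2) / 16) * (\<Sum>v\<in>V. p v)"
      by (simp add: sum_distrib_right mult_ac)
    also have "\<dots> \<le> 2 * exp (- (real r * e\<^sup>2) / 16) * k"
    proof (rule mult_left_mono)
      have "(\<Sum>v\<in>V. p v) \<le> real (vertex_diameter V E - 2)"
        using sum_prob_bound[OF G] unfolding p_def Q_def .
      also have "\<dots> \<le> k" using VD False unfolding k_def by simp
      finally show "(\<Sum>v\<in>V. p v) \<le> k" .
    qed simp
    also have "\<dots> = 2 * k * exp (- (real r * e\<^sup>2) / 16)" by simp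
    also have "\<dots> < d" by (rule fa(2))
    finally show ?thesis .
  qed
  finally show "let r = sample_size 128 e d D;
           S' = sample_set r (path_sampling V E) \<bind> updated_sample r E (E \<union> \<beta>)
       in measure_pmf.prob S'
            {T. \<exists>v\<in>V. \<bar>betweenness V (E \<union> \<beta>) v - approx_betweenness r T v\<bar> > e} < d"
    using S'eq unfolding Let_def r_def[symmetric] E'_def[symmetric] by simp
qed


end
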